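(* Let $A=(a_{ij})$ be a $3\times3$ Cartan matrix of infinite type whose principal submatrix $A_{12}$ is also of infinite type (i.e. $a_{12}a_{21}\ge 4$). Let $$\kappa=a_{12}\omega_1^2+a_{12}a_{21}\omega_1\omega_2+a_{21}\omega_2^2+a_{12}a_{31}\omega_1\omega_3+a_{21}a_{32}\omega_2\omega_3.$$ Then $\mathbb{Q}[\omega_1,\omega_2,\omega_3]^{\langle\sigma_1,\sigma_2\rangle}=\mathbb{Q}[\kappa,\omega_3]$.
   Context: A $3\times 3$ (generalized) Cartan matrix $A=(a_{ij})$ is an integer matrix with $a_{ii}=2$, $a_{ij}\le 0$ for $i\ne j$, $a_{ij}=0\iff a_{ji}=0$; infinite type means indecomposable and not of finite type. $\omega_1,\omega_2,\omega_3$ have degree 2 ($\mathbb{Q}[\omega_1,\omega_2,\omega_3]=H^*(BT;\mathbb{Q})$), $\alpha_j=\sum_i a_{ij}\omega_i$, and $\sigma_j(\omega_j)=\omega_j-\alpha_j$, $\sigma_j(\omega_i)=\omega_i$ for $i\ne j$. *)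

theory Defs
  imports "HOL-Computational_Algebra.Polynomial"
begin

text \<open>Q[w1,w2,w3] is represented as nested univariate polynomials rat poly poly poly:
  innermost variable w1, middle w2, outermost w3.\<close>

type_synonym mpoly3 = "rat poly poly poly"

definition cst3 :: "rat \<Rightarrow> mpoly3" where "cst3 c = [:[:[:c:]:]:]"

definition var3 :: "nat \<Rightarrow> mpoly3" where
  "var3 i = (if i = 1 then [:[:[:0,1:]:]:] else if i = 2 then [:[:0,1:]:] else [:0,1:])"

definition subst3 :: "mpoly3 \<Rightarrow> mpoly3 \<Rightarrow> mpoly3 \<Rightarrow> mpoly3 \<Rightarrow> mpoly3" where
  "subst3 p a b c =
     poly (map_poly (\<lambda>q. poly (map_poly (\<lambda>r. poly (map_poly cst3 r) a) q) b) p) c"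

definition cartan3 :: "(nat \<Rightarrow> nat \<Rightarrow> int) \<Rightarrow> bool" where
  "cartan3 A \<longleftrightarrow> (\<forall>i\<in>{1,2,3}. A i i = 2) \<and>
     (\<forall>i\<in>{1,2,3}. \<forall>j\<in>{1,2,3}. i \<noteq> j \<longrightarrow> A i j \<le> 0 \<and> (A i j = 0 \<longleftrightarrow> A j i = 0))"

definition indecomposable3 :: "(nat \<Rightarrow> nat \<Rightarrow> int) \<Rightarrow> bool" where
  "indecomposable3 A \<longleftrightarrow> \<not> (\<exists>I. I \<noteq> {} \<and> I \<subset> {1,2,3} \<and>
       (\<forall>i\<in>I. \<forall>j\<in>{1,2,3} - I. A i j = 0))"

definition det3 :: "(nat \<Rightarrow> nat \<Rightarrow> int) \<Rightarrow> int" where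
  "det3 A = A 1 1 * (A 2 2 * A 3 3 - A 2 3 * A 3 2)
          - A 1 2 * (A 2 1 * A 3 3 - A 2 3 * A 3 1)
          + A 1 3 * (A 2 1 * A 3 2 - A 2 2 * A 3 1)"

definition mulvec3 :: "(nat \<Rightarrow> nat \<Rightarrow> int) \<Rightarrow> (nat \<Rightarrow> real) \<Rightarrow> nat \<Rightarrow> real" where
  "mulvec3 A v i = (\<Sum>j\<in>{1,2,3}. of_int (A i j) * v j)"

text \<open>Kac's definition (Fin) of finite type for an indecomposable GCM.\<close>
definition finite_type3 :: "(nat \<Rightarrow> nat \<Rightarrow> int) \<Rightarrow> bool" where
  "finite_type3 A \<longleftrightarrow> indecomposable3 A \<and> det3 A \<noteq> 0 \<and>
     (\<exists>u. (\<forall>i\<in>{1,2,3}. u i > 0) \<and> (\<forall>i\<in>{1,2,3}. mulvec3 A u i > 0)) \<and>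
     (\<forall>v. (\<forall>i\<in>{1,2,3}. mulvec3 A v i \<ge> 0) \<longrightarrow>
          (\<forall>i\<in>{1,2,3}. v i > 0) \<or> (\<forall>i\<in>{1,2,3}. v i = 0))"

definition infinite_type3 :: "(nat \<Rightarrow> nat \<Rightarrow> int) \<Rightarrow> bool" where
  "infinite_type3 A \<longleftrightarrow> indecomposable3 A \<and> \<not> finite_type3 A"

definition alpha3 :: "(nat \<Rightarrow> nat \<Rightarrow> int) \<Rightarrow> nat \<Rightarrow> mpoly3" where
  "alpha3 A j = (\<Sum>i\<in>{1,2,3}. of_int (A i j) * var3 i)"

definition sigma3 :: "(nat \<Rightarrow> nat \<Rightarrow> int) \<Rightarrow> nat \<Rightarrow> mpoly3 \<Rightarrow> mpoly3" where
  "sigma3 A j f = subst3 f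
     (if j = 1 then var3 1 - alpha3 A 1 else var3 1)
     (if j = 2 then var3 2 - alpha3 A 2 else var3 2)
     (if j = 3 then var3 3 - alpha3 A 3 else var3 3)"

inductive_set gen12 :: "(nat \<Rightarrow> nat \<Rightarrow> int) \<Rightarrow> (mpoly3 \<Rightarrow> mpoly3) set" for A where
  gid: "id \<in> gen12 A"
| gstep: "g \<in> gen12 A \<Longrightarrow> j \<in> {1,2} \<Longrightarrow> sigma3 A j \<circ> g \<in> gen12 A"
| ginv: "g \<in> gen12 A \<Longrightarrow> j \<in> {1,2} \<Longrightarrow> inv (sigma3 A j) \<circ> g \<in> gen12 A"

definition invariants12 :: "(nat \<Rightarrow> nat \<Rightarrow> int) \<Rightarrow> mpoly3 set" where
  "invariants12 A = {f. \<forall>g\<in>gen12 A. g f = f}"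

definition subalg2 :: "mpoly3 \<Rightarrow> mpoly3 \<Rightarrow> mpoly3 set" where
  "subalg2 k z = {poly (map_poly (\<lambda>r. poly (map_poly cst3 r) k) q) z | q :: rat poly poly. True}"

definition kappa3 :: "(nat \<Rightarrow> nat \<Rightarrow> int) \<Rightarrow> mpoly3" where
  "kappa3 A = of_int (A 1 2) * var3 1 ^ 2 + of_int (A 1 2 * A 2 1) * var3 1 * var3 2
     + of_int (A 2 1) * var3 2 ^ 2 + of_int (A 1 2 * A 3 1) * var3 1 * var3 3
     + of_int (A 2 1 * A 3 2) * var3 2 * var3 3"

end

theory Submission
  imports Defs "HOL-Library.Infinite_Set"
begin


definition rh :: "('a::comm_ring_1 \<Rightarrow> 'b::comm_ring_1) \<Rightarrow> bool" where
  "rh h \<longleftrightarrow> (\<forall>x y. h (x + y) = h x + h y) \<and> (\<forall>x y. h (x * y) = h x * h y) \<and> h 1 = 1"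

lemma rh_add: "rh h \<Longrightarrow> h (x + y) = h x + h y" by (simp add: rh_def)
lemma rh_mult: "rh h \<Longrightarrow> h (x * y) = h x * h y" by (simp add: rh_def)
lemma rh_1: "rh h \<Longrightarrow> h 1 = 1" by (simp add: rh_def)
lemma rh_0: "rh h \<Longrightarrow> h 0 = 0"
  using rh_add[of h 0 0] by simp
lemma rh_uminus: "rh h \<Longrightarrow> h (- x) = - h x"
  using rh_add[of h x "-x"] rh_0[of h] by (simp add: eq_neg_iff_add_eq_0 add.commute)
lemma rh_diff: "rh h \<Longrightarrow> h (x - y) = h x - h y"
  using rh_add[of h x "-y"] rh_uminus[of h y] by simp
lemma rh_of_nat: "rh h \<Longrightarrow> h (of_nat n) = of_nat n"
  by (induct n) (simp_all add: rh_0 rh_add rh_1)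
lemma rh_of_int: assumes "rh h" shows "h (of_int k) = of_int k"
proof -
  have "k = int (nat k) \<or> k = - int (nat (-k))" by auto
  then show ?thesis
  proof
    assume "k = int (nat k)" then show ?thesis using assms rh_of_nat[of h "nat k"]
      by (metis of_int_of_nat_eq)
  next
    assume "k = - int (nat (-k))" then show ?thesis using assms rh_of_nat[of h "nat (-k)"] rh_uminus[of h]
      by (metis of_int_minus of_int_of_nat_eq)
  qed
qed
lemma rh_power: "rh h \<Longrightarrow> h (x ^ n) = h x ^ n"
  by (induct n) (simp_all add: rh_1 rh_mult)
lemma rh_comp: "rh f \<Longrightarrow> rh g \<Longrightarrow> rh (f \<circ> g)"
  by (simp add: rh_def)
lemma rh_id: "rh id" by (simp add: rh_def)

lemma rh_map_poly_add: "rh h \<Longrightarrow> map_poly h (p + q) = map_poly h p + map_poly h q"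
  by (intro poly_eqI) (simp add: coeff_map_poly rh_0 rh_add)

lemma rh_poly: "rh h \<Longrightarrow> h (poly P z) = poly (map_poly h P) (h z)"
  by (induct P) (simp_all add: map_poly_pCons rh_0 rh_add rh_mult)

lemma map_poly_pCons0: "f 0 = 0 \<Longrightarrow> map_poly f (pCons 0 p) = pCons 0 (map_poly f p)"
  by (simp add: map_poly_pCons)

lemma rh_eval: assumes "rh F" shows "rh (\<lambda>p. poly (map_poly F p) c)"
proof -
  have m: "poly (map_poly F (p * q)) c = poly (map_poly F p) c * poly (map_poly F q) c" for p q
  proof (induct p)
    case 0 then show ?case by simp
  next
    case (pCons a p)
    have "map_poly F (smult a q) = smult (F a) (map_poly F q)"
      by (rule map_poly_smult) (simp_all add: assms rh_0 rh_mult)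
    then show ?case using pCons
      by (simp add: rh_map_poly_add[OF assms] map_poly_pCons rh_0[OF assms] algebra_simps)
  qed
  show ?thesis unfolding rh_def
    by (simp add: rh_map_poly_add[OF assms] m rh_1[OF assms])
qed

lemma rh_cst3: "rh cst3"
  by (simp add: rh_def cst3_def one_pCons)

lemma rh_subst3: "rh (\<lambda>p. subst3 p a b c)"
  unfolding subst3_def
  by (intro rh_eval rh_cst3)

lemma subst3_push:
  assumes "rh h" "\<And>c. h (cst3 c) = cst3 c"
  shows "h (subst3 p a b c) = subst3 p (h a) (h b) (h c)"
proof -
  have hc: "h \<circ> cst3 = cst3" using assms(2) by auto
  have F1: "h \<circ> (\<lambda>r. poly (map_poly cst3 r) a) = (\<lambda>r. poly (map_poly cst3 r) (h a))"
    by (rule ext) (simp add: rh_poly[OF assms(1)] map_poly_map_poly rh_0[OF assms(1)] cst3_def hc)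
  have r1: "rh (\<lambda>r. poly (map_poly cst3 r) a)" by (intro rh_eval rh_cst3)
  have F2: "h \<circ> (\<lambda>q. poly (map_poly (\<lambda>r. poly (map_poly cst3 r) a) q) b)
      = (\<lambda>q. poly (map_poly (\<lambda>r. poly (map_poly cst3 r) (h a)) q) (h b))"
    by (rule ext) (simp add: rh_poly[OF assms(1)] map_poly_map_poly rh_0[OF assms(1)] rh_0[OF r1] F1)
  have r2: "rh (\<lambda>q. poly (map_poly (\<lambda>r. poly (map_poly cst3 r) a) q) b)" by (intro rh_eval r1)
  show ?thesis unfolding subst3_def
    by (simp add: rh_poly[OF assms(1)] map_poly_map_poly rh_0[OF assms(1)] rh_0[OF r2] F2)
qed

lemma subst3_cst3 [simp]: "subst3 (cst3 c) a b d = cst3 c"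
  by (simp add: subst3_def cst3_def map_poly_pCons)

lemma subst3_var1 [simp]: "subst3 (var3 1) a b c = a"
  by (simp add: subst3_def cst3_def var3_def map_poly_pCons one_pCons[symmetric])
lemma subst3_var1' [simp]: "subst3 (var3 (Suc 0)) a b c = a"
  using subst3_var1 by simp
lemma subst3_var2 [simp]: "subst3 (var3 2) a b c = b"
  by (simp add: subst3_def cst3_def var3_def map_poly_pCons one_pCons[symmetric])
lemma subst3_var3 [simp]: "subst3 (var3 3) a b c = c"
  by (simp add: subst3_def cst3_def var3_def map_poly_pCons one_pCons[symmetric])

lemma subst3_id: "subst3 p (var3 1) (var3 2) (var3 3) = p"
proof -
  have l1: "poly (map_poly cst3 r) (var3 1) = [:[:r:]:]" for r
    by (induct r) (simp_all add: map_poly_pCons cst3_def var3_def)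
  have l2: "poly (map_poly (\<lambda>r. [:[:r:]:]) q) (var3 2) = [:q:]" for q
    by (induct q) (simp_all add: map_poly_pCons var3_def)
  have l3: "poly (map_poly (\<lambda>q. [:q:]) p) (var3 3) = p" for p :: mpoly3
    by (induct p) (simp_all add: map_poly_pCons var3_def)
  show ?thesis unfolding subst3_def l1 l2 l3 ..
qed

lemma subst3_comp:
  "subst3 (subst3 p a b c) a' b' c' = subst3 p (subst3 a a' b' c') (subst3 b a' b' c') (subst3 c a' b' c')"
  using subst3_push[OF rh_subst3, of a' b' c'] by simp



lemma rh_sigma: "rh (sigma3 A j)"
  unfolding sigma3_def[abs_def] by (rule rh_subst3)

lemma sig_add [simp]: "sigma3 A j (x + y) = sigma3 A j x + sigma3 A j y" by (rule rh_add[OF rh_sigma])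
lemma sig_mult [simp]: "sigma3 A j (x * y) = sigma3 A j x * sigma3 A j y" by (rule rh_mult[OF rh_sigma])
lemma sig_diff [simp]: "sigma3 A j (x - y) = sigma3 A j x - sigma3 A j y" by (rule rh_diff[OF rh_sigma])
lemma sig_uminus [simp]: "sigma3 A j (- x) = - sigma3 A j x" by (rule rh_uminus[OF rh_sigma])
lemma sig_of_int [simp]: "sigma3 A j (of_int k) = of_int k" by (rule rh_of_int[OF rh_sigma])
lemma sig_power [simp]: "sigma3 A j (x ^ n) = sigma3 A j x ^ n" by (rule rh_power[OF rh_sigma])
lemma sig_cst3 [simp]: "sigma3 A j (cst3 c) = cst3 c" by (simp add: sigma3_def)

lemma alpha3_exp: "alpha3 A j = of_int (A 1 j) * var3 1 + of_int (A 2 j) * var3 2 + of_int (A 3 j) * var3 3"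
  by (simp add: alpha3_def)

lemma sig1_v1: "sigma3 A 1 (var3 1) = var3 1 - alpha3 A 1" by (simp add: sigma3_def)
lemma sig1_v1': "sigma3 A (Suc 0) (var3 (Suc 0)) = var3 1 - alpha3 A 1" by (simp add: sigma3_def)
lemma sig1_v2 [simp]: "sigma3 A (Suc 0) (var3 2) = var3 2" by (simp add: sigma3_def)
lemma sig1_v3 [simp]: "sigma3 A (Suc 0) (var3 3) = var3 3" by (simp add: sigma3_def)
lemma sig2_v1 [simp]: "sigma3 A 2 (var3 (Suc 0)) = var3 1" by (simp add: sigma3_def)
lemma sig2_v2: "sigma3 A 2 (var3 2) = var3 2 - alpha3 A 2" by (simp add: sigma3_def)
lemma sig2_v3 [simp]: "sigma3 A 2 (var3 3) = var3 3" by (simp add: sigma3_def)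

lemma cst3_of_int: "cst3 (of_int k) = of_int k" by (rule rh_of_int[OF rh_cst3])
lemma cst3_add: "cst3 (x + y) = cst3 x + cst3 y" by (rule rh_add[OF rh_cst3])
lemma cst3_mult: "cst3 (x * y) = cst3 x * cst3 y" by (rule rh_mult[OF rh_cst3])
lemma cst3_diff: "cst3 (x - y) = cst3 x - cst3 y" by (rule rh_diff[OF rh_cst3])
lemma cst3_uminus: "cst3 (- x) = - cst3 x" by (rule rh_uminus[OF rh_cst3])
lemmas cst3_simps = cst3_add cst3_mult cst3_diff cst3_uminus cst3_of_int

lemma sig1_kappa: assumes "A 1 1 = 2" shows "sigma3 A 1 (kappa3 A) = kappa3 A"
  unfolding kappa3_def using assms
  apply (simp add: sig1_v1' alpha3_exp)
  apply (simp add: algebra_simps power2_eq_square)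
  done

lemma sig2_kappa: assumes "A 2 2 = 2" shows "sigma3 A 2 (kappa3 A) = kappa3 A"
  unfolding kappa3_def using assms
  apply (simp add: sig2_v2 alpha3_exp)
  apply (simp add: algebra_simps power2_eq_square)
  done

lemma sig_invol:
  assumes "j \<in> {1,2}" "A j j = 2"
  shows "sigma3 A j (sigma3 A j p) = p"
proof -
  have "sigma3 A j (sigma3 A j p) = sigma3 A j (subst3 p
     (if j = 1 then var3 1 - alpha3 A 1 else var3 1)
     (if j = 2 then var3 2 - alpha3 A 2 else var3 2)
     (if j = 3 then var3 3 - alpha3 A 3 else var3 3))" by (simp add: sigma3_def)
  also have "\<dots> = subst3 p (var3 1) (var3 2) (var3 3)"
    using assms
    by (auto simp add: subst3_push[OF rh_sigma sig_cst3] sig1_v1' sig2_v2 alpha3_exp)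
  finally show ?thesis using subst3_id[of p] by simp
qed

lemma inv_sig:
  assumes "j \<in> {1,2}" "A j j = 2"
  shows "inv (sigma3 A j) = sigma3 A j"
  using sig_invol[of j A, OF assms] by (intro inv_unique_comp) (auto simp: fun_eq_iff)

definition Ev :: "mpoly3 \<Rightarrow> mpoly3 \<Rightarrow> rat poly poly \<Rightarrow> mpoly3" where
  "Ev k z q = poly (map_poly (\<lambda>r. poly (map_poly cst3 r) k) q) z"

lemma subalg2_Ev: "subalg2 k z = range (Ev k z)"
  by (auto simp: subalg2_def Ev_def)

lemma rh_Ev: "rh (Ev k z)"
  unfolding Ev_def[abs_def] by (intro rh_eval rh_cst3)

lemma Ev_fix:
  assumes "rh h" "\<And>c. h (cst3 c) = cst3 c" "h k = k" "h z = z"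
  shows "h (Ev k z q) = Ev k z q"
proof -
  have hc: "h \<circ> cst3 = cst3" using assms(2) by auto
  have F1: "h \<circ> (\<lambda>r. poly (map_poly cst3 r) k) = (\<lambda>r. poly (map_poly cst3 r) k)"
    by (rule ext) (simp add: rh_poly[OF assms(1)] map_poly_map_poly rh_0[OF assms(1)] cst3_def hc assms(3))
  have r1: "rh (\<lambda>r. poly (map_poly cst3 r) k)" by (intro rh_eval rh_cst3)
  show ?thesis unfolding Ev_def
    by (simp add: rh_poly[OF assms(1)] map_poly_map_poly rh_0[OF assms(1)] rh_0[OF r1] F1 assms(4))
qed

lemma S_fix:
  assumes "rh h" "\<And>c. h (cst3 c) = cst3 c" "h k = k" "h z = z" "s \<in> subalg2 k z"
  shows "h s = s"
  using assms Ev_fix[OF assms(1-4)] by (auto simp: subalg2_Ev)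

lemma S_add: "x \<in> subalg2 k z \<Longrightarrow> y \<in> subalg2 k z \<Longrightarrow> x + y \<in> subalg2 k z"
  unfolding subalg2_Ev by (auto simp: rh_add[OF rh_Ev, symmetric])
lemma S_mult: "x \<in> subalg2 k z \<Longrightarrow> y \<in> subalg2 k z \<Longrightarrow> x * y \<in> subalg2 k z"
  unfolding subalg2_Ev by (auto simp: rh_mult[OF rh_Ev, symmetric])
lemma S_0: "0 \<in> subalg2 k z"
  unfolding subalg2_Ev by (metis rangeI rh_0[OF rh_Ev])
lemma S_cst3: "cst3 c \<in> subalg2 k z"
proof -
  have "Ev k z [:[:c:]:] = cst3 c" by (simp add: Ev_def map_poly_pCons cst3_def)
  then show ?thesis unfolding subalg2_Ev by (metis rangeI)
qed
lemma S_k: "k \<in> subalg2 k z"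
proof -
  have "Ev k z [:[:0,1:]:] = k" by (simp add: Ev_def map_poly_pCons cst3_def one_pCons[symmetric])
  then show ?thesis unfolding subalg2_Ev by (metis rangeI)
qed
lemma S_z: "z \<in> subalg2 k z"
proof -
  have "Ev k z [:0,1:] = z" by (simp add: Ev_def map_poly_pCons cst3_def one_pCons[symmetric])
  then show ?thesis unfolding subalg2_Ev by (metis rangeI)
qed



lemma sub_add [simp]: "subst3 (x + y) a b c = subst3 x a b c + subst3 y a b c" by (rule rh_add[OF rh_subst3])
lemma sub_mult [simp]: "subst3 (x * y) a b c = subst3 x a b c * subst3 y a b c" by (rule rh_mult[OF rh_subst3])
lemma sub_of_int [simp]: "subst3 (of_int k) a b c = of_int k" by (rule rh_of_int[OF rh_subst3])

lemma S_uminus: "x \<in> subalg2 k z \<Longrightarrow> - x \<in> subalg2 k z"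
  using S_mult[OF S_cst3[of "-1"], of x] by (simp add: cst3_uminus cst3_of_int[of 1, simplified])
lemma S_of_int: "of_int n \<in> subalg2 k z"
  using S_cst3[of "of_int n"] by (simp add: cst3_of_int)
lemma S_1: "1 \<in> subalg2 k z"
  using S_cst3[of 1] by (simp add: cst3_def one_pCons)
lemma S_sum: "(\<And>i. f i \<in> subalg2 k z) \<Longrightarrow> (\<Sum>i\<le>(n::nat). f i) \<in> subalg2 k z"
  by (induct n) (simp_all add: S_add)

definition cin :: "mpoly3 set \<Rightarrow> mpoly3 poly \<Rightarrow> bool" where
  "cin S P \<longleftrightarrow> (\<forall>i. coeff P i \<in> S)"

lemma cin_0: "cin (subalg2 k z) 0" by (simp add: cin_def S_0)
lemma cin_pCons: "a \<in> subalg2 k z \<Longrightarrow> cin (subalg2 k z) P \<Longrightarrow> cin (subalg2 k z) (pCons a P)"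
  by (auto simp: cin_def coeff_pCons split: nat.splits)
lemma cin_add: "cin (subalg2 k z) P \<Longrightarrow> cin (subalg2 k z) Q \<Longrightarrow> cin (subalg2 k z) (P + Q)"
  by (simp add: cin_def S_add)
lemma cin_mult: "cin (subalg2 k z) P \<Longrightarrow> cin (subalg2 k z) Q \<Longrightarrow> cin (subalg2 k z) (P * Q)"
  unfolding cin_def coeff_mult by (intro allI S_sum S_mult) auto

definition repset :: "mpoly3 \<Rightarrow> mpoly3 \<Rightarrow> mpoly3 set" where
  "repset k z = {f. \<exists>P P'. cin (subalg2 k z) P \<and> cin (subalg2 k z) P' \<and>
      f = poly P (var3 2) + var3 1 * poly P' (var3 2)}"

lemma rep_add: "x \<in> repset k z \<Longrightarrow> y \<in> repset k z \<Longrightarrow> x + y \<in> repset k z"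
  unfolding repset_def
proof (clarify)
  fix P P' Q Q' assume "cin (subalg2 k z) P" "cin (subalg2 k z) P'" "cin (subalg2 k z) Q" "cin (subalg2 k z) Q'"
  then show "\<exists>R R'. cin (subalg2 k z) R \<and> cin (subalg2 k z) R' \<and>
    poly P (var3 2) + var3 1 * poly P' (var3 2) + (poly Q (var3 2) + var3 1 * poly Q' (var3 2))
     = poly R (var3 2) + var3 1 * poly R' (var3 2)"
    by (intro exI[of _ "P + Q"] exI[of _ "P' + Q'"]) (simp add: cin_add algebra_simps)
qed

lemma rep_mult:
  assumes sq: "\<exists>C D. cin (subalg2 k z) C \<and> cin (subalg2 k z) D \<and>
      var3 1 * var3 1 = poly C (var3 2) + var3 1 * poly D (var3 2)"
  shows "x \<in> repset k z \<Longrightarrow> y \<in> repset k z \<Longrightarrow> x * y \<in> repset k z"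
  unfolding repset_def
proof (clarify)
  fix P P' Q Q' assume h: "cin (subalg2 k z) P" "cin (subalg2 k z) P'" "cin (subalg2 k z) Q" "cin (subalg2 k z) Q'"
  obtain C D where cd: "cin (subalg2 k z) C" "cin (subalg2 k z) D"
      "var3 1 * var3 1 = poly C (var3 2) + var3 1 * poly D (var3 2)" using sq by blast
  have e: "(poly P (var3 2) + var3 1 * poly P' (var3 2)) * (poly Q (var3 2) + var3 1 * poly Q' (var3 2))
     = poly (P * Q + C * (P' * Q')) (var3 2) + var3 1 * poly (P * Q' + P' * Q + D * (P' * Q')) (var3 2)"
  proof -
    have "(poly P (var3 2) + var3 1 * poly P' (var3 2)) * (poly Q (var3 2) + var3 1 * poly Q' (var3 2))
      = poly P (var3 2) * poly Q (var3 2) + var3 1 * (poly P (var3 2) * poly Q' (var3 2) + poly P' (var3 2) * poly Q (var3 2))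
        + (var3 1 * var3 1) * (poly P' (var3 2) * poly Q' (var3 2))" by (simp add: algebra_simps)
    also have "\<dots> = poly (P * Q + C * (P' * Q')) (var3 2) + var3 1 * poly (P * Q' + P' * Q + D * (P' * Q')) (var3 2)"
      unfolding cd(3) by (simp add: algebra_simps)
    finally show ?thesis .
  qed
  show "\<exists>R R'. cin (subalg2 k z) R \<and> cin (subalg2 k z) R' \<and>
    (poly P (var3 2) + var3 1 * poly P' (var3 2)) * (poly Q (var3 2) + var3 1 * poly Q' (var3 2))
     = poly R (var3 2) + var3 1 * poly R' (var3 2)"
    using e h cd by (intro exI[of _ "P * Q + C * (P' * Q')"] exI[of _ "P * Q' + P' * Q + D * (P' * Q')"])
      (simp add: cin_add cin_mult)
qed

lemma rep_0: "0 \<in> repset k z"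
  unfolding repset_def by (auto intro!: exI[of _ 0] cin_0)
lemma rep_S: assumes "s \<in> subalg2 k z" shows "s \<in> repset k z"
proof -
  have "cin (subalg2 k z) [:s:]" by (intro cin_pCons cin_0 assms)
  then show ?thesis unfolding repset_def
    by (intro CollectI exI[of _ "[:s:]"] exI[of _ 0]) (simp add: cin_0)
qed
lemma rep_x1: "var3 1 \<in> repset k z"
proof -
  have "cin (subalg2 k z) [:1:]" 
    by (intro cin_pCons cin_0 S_1)
  then have "cin (subalg2 k z) 1" by (simp add: one_pCons[symmetric])
  then show ?thesis unfolding repset_def
    by (intro CollectI exI[of _ 0] exI[of _ 1]) (simp add: cin_0)
qed
lemma rep_x2: "var3 2 \<in> repset k z"
proof -
  have "cin (subalg2 k z) [:0, 1:]"
    by (intro cin_pCons cin_0 S_0 S_1)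
  then show ?thesis unfolding repset_def
    by (intro CollectI exI[of _ "[:0,1:]"] exI[of _ 0]) (simp add: cin_0)
qed

lemma rep_x1': "var3 (Suc 0) \<in> repset k z" using rep_x1 by simp

lemma poly_closed:
  assumes "0 \<in> T" "\<And>x y. x \<in> T \<Longrightarrow> y \<in> T \<Longrightarrow> x + y \<in> T" "\<And>x y. x \<in> T \<Longrightarrow> y \<in> T \<Longrightarrow> x * y \<in> T"
    "F 0 = 0" "\<And>c. F c \<in> T" "zz \<in> T"
  shows "poly (map_poly F p) zz \<in> T"
  by (induct p) (simp_all add: assms map_poly_pCons)

lemma rep_all:
  assumes sq: "\<exists>C D. cin (subalg2 k z) C \<and> cin (subalg2 k z) D \<and>
      var3 1 * var3 1 = poly C (var3 2) + var3 1 * poly D (var3 2)"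
    and z3: "var3 3 \<in> repset k z"
  shows "f \<in> repset k z"
proof -
  note cl = rep_0 rep_add rep_mult[OF sq]
  have r1: "rh (\<lambda>r. poly (map_poly cst3 r) (var3 1))" by (intro rh_eval rh_cst3)
  have r2: "rh (\<lambda>q. poly (map_poly (\<lambda>r. poly (map_poly cst3 r) (var3 1)) q) (var3 2))" by (intro rh_eval r1)
  have i1: "poly (map_poly cst3 r) (var3 1) \<in> repset k z" for r
    by (rule poly_closed[OF cl]) (simp_all add: rep_x1' rep_S S_cst3 rh_0[OF rh_cst3])
  have i2: "poly (map_poly (\<lambda>r. poly (map_poly cst3 r) (var3 1)) q) (var3 2) \<in> repset k z" for q
    by (rule poly_closed[OF cl]) (simp_all add: rep_x2 i1[simplified] rh_0[OF r1])
  have "subst3 f (var3 1) (var3 2) (var3 3) \<in> repset k z" unfolding subst3_def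
    by (rule poly_closed[OF cl]) (simp_all add: z3 i2[simplified] rh_0[OF r2])
  then show ?thesis using subst3_id[of f] by simp
qed



abbreviation SS :: "(nat \<Rightarrow> nat \<Rightarrow> int) \<Rightarrow> mpoly3 set" where
  "SS A \<equiv> subalg2 (kappa3 A) (var3 3)"

lemma sq_kappa:
  assumes "A 1 2 \<noteq> 0"
  shows "\<exists>C D. cin (SS A) C \<and> cin (SS A) D \<and>
      var3 1 * var3 1 = poly C (var3 2) + var3 1 * poly D (var3 2)"
proof -
  define u where "u = cst3 (1 / of_int (A 1 2))"
  have hu: "u * of_int (A 1 2) = 1"
    unfolding u_def cst3_of_int[symmetric] cst3_mult[symmetric] using assms
    by (simp add: cst3_def one_pCons)
  define C where "C = [: u * kappa3 A, -(u * of_int (A 2 1 * A 3 2)) * var3 3, -(u * of_int (A 2 1)) :]"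
  define D where "D = [: -(of_int (A 3 1) * var3 3), -(of_int (A 2 1)) :]"
  have uS: "u \<in> SS A" unfolding u_def by (rule S_cst3)
  have cC: "cin (SS A) C" unfolding C_def
    by (intro cin_pCons cin_0 S_mult S_uminus uS S_k S_z S_of_int)
  have cD: "cin (SS A) D" unfolding D_def
    by (intro cin_pCons cin_0 S_mult S_uminus S_z S_of_int)
  have e1: "poly C (var3 2) = u * (of_int (A 1 2) * (var3 1 * var3 1 + of_int (A 2 1) * var3 1 * var3 2
      + of_int (A 3 1) * var3 1 * var3 3))"
    unfolding C_def kappa3_def by (simp add: algebra_simps power2_eq_square)
  also have "\<dots> = (u * of_int (A 1 2)) * (var3 1 * var3 1 + of_int (A 2 1) * var3 1 * var3 2
      + of_int (A 3 1) * var3 1 * var3 3)" by (simp add: algebra_simps)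
  also have "\<dots> = var3 1 * var3 1 + of_int (A 2 1) * var3 1 * var3 2 + of_int (A 3 1) * var3 1 * var3 3"
    using hu by simp
  finally have "var3 1 * var3 1 = poly C (var3 2) + var3 1 * poly D (var3 2)"
    unfolding D_def by (simp add: algebra_simps)
  with cC cD show ?thesis by blast
qed

lemma sig_fixS:
  assumes "j \<in> {1,2}" "A 1 1 = 2" "A 2 2 = 2" "s \<in> SS A"
  shows "sigma3 A j s = s"
proof (cases "j = 1")
  case True
  have "sigma3 A 1 (var3 3) = var3 3" by (simp add: sigma3_def)
  then show ?thesis using True S_fix[OF rh_sigma sig_cst3 sig1_kappa[of A, OF assms(2)] _ assms(4)] by simp
next
  case False
  then have j: "j = 2" using assms(1) by auto
  have "sigma3 A 2 (var3 3) = var3 3" by (simp add: sigma3_def)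
  then show ?thesis using j S_fix[OF rh_sigma sig_cst3 sig2_kappa[of A, OF assms(3)] _ assms(4)] by simp
qed

lemma gen12_prop:
  assumes "A 1 1 = 2" "A 2 2 = 2" "g \<in> gen12 A"
  shows "rh g \<and> (\<forall>s\<in>SS A. g s = s)"
  using assms(3)
proof induct
  case gid then show ?case using rh_id by (simp add: id_def)
next
  case (gstep g j)
  have "rh (sigma3 A j \<circ> g)" using gstep rh_comp[OF rh_sigma] by blast
  then show ?case
  proof (rule conjI, intro ballI)
    fix s assume "s \<in> SS A"
    then show "(sigma3 A j \<circ> g) s = s" using gstep sig_fixS[of j A, OF gstep(3) assms(1,2)] by simp
  qed
next
  case (ginv g j)
  have "A j j = 2" using ginv(3) assms(1,2) by auto
  then have ie: "inv (sigma3 A j) = sigma3 A j" using inv_sig[of j A] ginv(3) by simp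
  have r: "rh (sigma3 A j \<circ> g)" using ginv rh_comp[OF rh_sigma] by blast
  have f: "\<forall>s\<in>SS A. (sigma3 A j \<circ> g) s = s" using ginv sig_fixS[of j A, OF ginv(3) assms(1,2)] by simp
  show ?case unfolding ie using r f by blast
qed

definition lin3 :: "rat \<times> rat \<times> rat \<Rightarrow> mpoly3" where
  "lin3 c = cst3 (fst c) * var3 1 + cst3 (fst (snd c)) * var3 2 + cst3 (snd (snd c)) * var3 3"

definition stepc :: "(nat \<Rightarrow> nat \<Rightarrow> int) \<Rightarrow> rat \<times> rat \<times> rat \<Rightarrow> rat \<times> rat \<times> rat" where
  "stepc A c = (let e1 = fst c - of_int (A 1 2) * fst (snd c); e2 = - fst (snd c);
      e3 = snd (snd c) - of_int (A 3 2) * fst (snd c)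
    in (- e1, e2 - of_int (A 2 1) * e1, e3 - of_int (A 3 1) * e1))"

lemma step_lin:
  assumes "A 1 1 = 2" "A 2 2 = 2"
  shows "sigma3 A 1 (sigma3 A 2 (lin3 c)) = lin3 (stepc A c)"
proof -
  obtain c1 c2 c3 where c: "c = (c1, c2, c3)" by (cases c) auto
  show ?thesis unfolding c lin3_def stepc_def Let_def using assms
    by (simp add: sig2_v2 sig1_v1' alpha3_exp cst3_simps algebra_simps)
qed

definition gs :: "(nat \<Rightarrow> nat \<Rightarrow> int) \<Rightarrow> nat \<Rightarrow> mpoly3 \<Rightarrow> mpoly3" where
  "gs A n = (sigma3 A 1 \<circ> sigma3 A 2) ^^ n"

lemma gs_gen: "gs A n \<in> gen12 A"
proof (induct n)
  case 0 then show ?case unfolding gs_def funpow.simps(1) by (rule gid)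
next
  case (Suc n)
  have "sigma3 A 2 \<circ> gs A n \<in> gen12 A" using Suc by (rule gstep) auto
  then have "sigma3 A 1 \<circ> (sigma3 A 2 \<circ> gs A n) \<in> gen12 A" by (rule gstep) auto
  moreover have "gs A (Suc n) = sigma3 A 1 \<circ> (sigma3 A 2 \<circ> gs A n)"
    by (simp only: gs_def funpow.simps comp_assoc)
  ultimately show ?case by metis
qed

lemma gs_lin:
  assumes "A 1 1 = 2" "A 2 2 = 2"
  shows "gs A n (var3 2) = lin3 ((stepc A ^^ n) (0, 1, 0))"
proof (induct n)
  case 0 then show ?case by (simp add: gs_def lin3_def rh_0[OF rh_cst3] rh_1[OF rh_cst3])
next
  case (Suc n)
  then show ?case using step_lin[of A, OF assms] by (simp add: gs_def)
qed

definition Pinv :: "(nat \<Rightarrow> nat \<Rightarrow> int) \<Rightarrow> rat \<times> rat \<times> rat \<Rightarrow> bool" where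
  "Pinv A c \<longleftrightarrow> fst (snd c) \<ge> 1 \<and>
     - of_int (A 2 1) * fst c + (of_int (A 1 2 * A 2 1) - 2) * fst (snd c) \<ge> 2"

lemma Pinv_step:
  assumes "A 1 2 * A 2 1 \<ge> 4" "Pinv A c"
  shows "Pinv A (stepc A c) \<and> fst (snd (stepc A c)) > fst (snd c)"
proof -
  obtain c1 c2 c3 where c: "c = (c1, c2, c3)" by (cases c) auto
  define d where "d = - of_int (A 2 1) * c1 + (of_int (A 1 2 * A 2 1) - 2) * c2"
  have hc: "c2 \<ge> 1" "d \<ge> 2" using assms(2) by (auto simp: Pinv_def c d_def)
  define c2' where "c2' = fst (snd (stepc A c))"
  define c1' where "c1' = fst (stepc A c)"
  have e2: "c2' = c2 + d" unfolding c2'_def d_def c stepc_def Let_def by (simp add: algebra_simps)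
  have e1: "c1' = of_int (A 1 2) * c2 - c1" unfolding c1'_def c stepc_def Let_def by (simp add: algebra_simps)
  have ed: "- of_int (A 2 1) * c1' + (of_int (A 1 2 * A 2 1) - 2) * c2'
      = d + (of_int (A 1 2 * A 2 1) - 4) * c2'"
    unfolding e1 e2 d_def by (simp add: algebra_simps)
  have "(of_int (A 1 2 * A 2 1) - 4 :: rat) \<ge> 0" using assms(1)
    proof -
    have "(of_int (A 1 2 * A 2 1) :: rat) \<ge> of_int 4" using assms(1) by (simp only: of_int_le_iff)
    then show ?thesis by simp
  qed
  moreover have "c2' \<ge> 0" using e2 hc by simp
  ultimately have "(of_int (A 1 2 * A 2 1) - 4) * c2' \<ge> 0" by simp
  then have "- of_int (A 2 1) * c1' + (of_int (A 1 2 * A 2 1) - 2) * c2' \<ge> 2" using ed hc by linarith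
  moreover have "c2' \<ge> 1" "c2' > c2" using e2 hc by auto
  ultimately show ?thesis unfolding Pinv_def c1'_def c2'_def c by simp
qed

lemma gs_inj:
  assumes "A 1 1 = 2" "A 2 2 = 2" "A 1 2 * A 2 1 \<ge> 4"
  shows "inj (\<lambda>n. gs A n (var3 2))"
proof -
  define r where "r n = fst (snd ((stepc A ^^ n) (0, 1, 0)))" for n
  have P: "Pinv A ((stepc A ^^ n) (0, 1, 0))" for n
  proof (induct n)
    case 0
    have "(of_int (A 1 2 * A 2 1) :: rat) \<ge> of_int 4" using assms(3) by (simp only: of_int_le_iff)
    then show ?case unfolding Pinv_def by simp
  next
    case (Suc n) then show ?case using Pinv_step[OF assms(3)] by simp
  qed
  have "strict_mono r"
    unfolding strict_mono_Suc_iff r_def using Pinv_step[OF assms(3) P] by simp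
  then have ir: "inj r" by (rule strict_mono_imp_inj_on)
  have ex: "subst3 (lin3 c) 0 1 0 = cst3 (fst (snd c))" for c
    by (simp add: lin3_def)
  show ?thesis
  proof (rule injI)
    fix m n assume "gs A m (var3 2) = gs A n (var3 2)"
    then have "cst3 (r m) = cst3 (r n)" unfolding gs_lin[of A, OF assms(1,2)] r_def
      by (metis ex)
    then have "r m = r n" by (simp add: cst3_def)
    then show "m = n" using ir by (simp add: inj_eq)
  qed
qed



lemma map_poly_fix:
  assumes "rh h" "cin (SS A) P" "\<And>s. s \<in> SS A \<Longrightarrow> h s = s"
  shows "map_poly h P = P"
  by (rule poly_eqI) (use assms in \<open>simp add: coeff_map_poly rh_0 cin_def\<close>)

lemma alpha1_nz: assumes "A 1 1 = 2" shows "alpha3 A 1 \<noteq> 0"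
proof
  assume "alpha3 A 1 = 0"
  then have "subst3 (alpha3 A 1) 1 0 0 = 0" by (simp add: rh_0[OF rh_subst3])
  then show False using assms by (simp add: alpha3_exp)
qed

lemma hard:
  assumes a11: "A 1 1 = 2" and a22: "A 2 2 = 2" and nz: "A 1 2 \<noteq> 0" and pr: "A 1 2 * A 2 1 \<ge> 4"
    and inv: "\<forall>g\<in>gen12 A. g f = f"
  shows "f \<in> SS A"
proof -
  have "sigma3 A 1 \<circ> id \<in> gen12 A" by (rule gstep[OF gid]) simp
  then have s1: "sigma3 A 1 f = f" using inv by auto
  have "f \<in> repset (kappa3 A) (var3 3)"
    by (rule rep_all[OF sq_kappa[of A, OF nz] rep_S[OF S_z]])
  then obtain P P' where cP: "cin (SS A) P" and cP': "cin (SS A) P'"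
    and fP: "f = poly P (var3 2) + var3 1 * poly P' (var3 2)" unfolding repset_def by blast
  have fix1: "\<And>s. s \<in> SS A \<Longrightarrow> sigma3 A 1 s = s" using sig_fixS[of 1 A] a11 a22 by auto
  have "sigma3 A 1 (poly P (var3 2)) = poly P (var3 2)"
    using rh_poly[OF rh_sigma, of A 1 P "var3 2"] map_poly_fix[OF rh_sigma cP fix1] by simp
  moreover have "sigma3 A 1 (poly P' (var3 2)) = poly P' (var3 2)"
    using rh_poly[OF rh_sigma, of A 1 P' "var3 2"] map_poly_fix[OF rh_sigma cP' fix1] by simp
  ultimately have "sigma3 A 1 f = poly P (var3 2) + (var3 1 - alpha3 A 1) * poly P' (var3 2)"
    unfolding fP using sig1_v1[of A] by simp
  with s1 fP have "alpha3 A 1 * poly P' (var3 2) = 0" by (simp add: algebra_simps)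
  with alpha1_nz[of A, OF a11] have "poly P' (var3 2) = 0" by simp
  with fP have fP2: "f = poly P (var3 2)" by simp
  define R where "R = P - [:f:]"
  have root: "poly R (g (var3 2)) = 0" if g: "g \<in> gen12 A" for g
  proof -
    have gp: "rh g" "\<forall>s\<in>SS A. g s = s" using gen12_prop[of A, OF a11 a22 g] by auto
    have "g f = poly P (g (var3 2))"
      unfolding fP2 using rh_poly[OF gp(1)] map_poly_fix[OF gp(1) cP] gp(2) by simp
    then show ?thesis using inv g unfolding R_def by auto
  qed
  have "range (\<lambda>n. gs A n (var3 2)) \<subseteq> {x. poly R x = 0}"
    using root gs_gen by auto
  moreover have "infinite (range (\<lambda>n. gs A n (var3 2)))"
    by (rule range_inj_infinite[OF gs_inj[of A, OF a11 a22 pr]])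
  ultimately have "infinite {x. poly R x = 0}" using finite_subset by blast
  then have "R = 0" using poly_roots_finite by blast
  then have "P = [:f:]" unfolding R_def by simp
  then have "coeff P 0 = f" by simp
  then show ?thesis using cP unfolding cin_def by metis
qed

theorem lemma7p3:
  fixes A :: "nat \<Rightarrow> nat \<Rightarrow> int"
  assumes "cartan3 A" and "infinite_type3 A" and "A 1 2 * A 2 1 \<ge> 4"
  shows "invariants12 A = subalg2 (kappa3 A) (var3 3)"
proof -
  have a11: "A 1 1 = 2" and a22: "A 2 2 = 2" using assms(1) unfolding cartan3_def by auto
  have nz: "A 1 2 \<noteq> 0" using assms(3) by auto
  show ?thesis
  proof
    show "invariants12 A \<subseteq> subalg2 (kappa3 A) (var3 3)"
      unfolding invariants12_def using hard[of A, OF a11 a22 nz assms(3)] by blast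
    show "subalg2 (kappa3 A) (var3 3) \<subseteq> invariants12 A"
      unfolding invariants12_def using gen12_prop[of A, OF a11 a22] by blast
  qed
qed

end
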